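(* Let $H$ be a hexagonal system with a perfect matching. Suppose $\mathcal{D}=\{D_1,\ldots,D_k\}$ is a set of elementary edge cuts of $H$ such that every nice cycle of $H$ has at least one edge in common with some $D_i\in\mathcal{D}$. Then $D=\bigcup_{i=1}^{k}D_i$ is a complete forcing set of $H$.
   Context: A hexagonal system (HS) is a finite 2-connected plane graph in which every interior face is a regular hexagon of the hexagonal lattice; its vertices are properly colored black and white. A cycle $C$ of a graph $G$ with a perfect matching is nice if $G-V(C)$ has a perfect matching. For a partition $\{V_1,V_2\}$ of $V(H)$, the set $D$ of edges with one end in $V_1$ and the other in $V_2$ is an edge cut; $D$ is an elementary edge cut (e-cut) if $H-D$ has exactly two components and every edge of $D$ joins a black vertex of one of these components to a white vertex of the other. For a perfect matching $M$ of $G$, a forcing set of $M$ is a subset of $M$ contained in no other perfect matching of $G$. A complete forcing set of $G$ is a set $S\subseteq E(G)$ such that for every perfect matching $M$ of $G$, $S\cap M$ is a forcing set of $M$. *)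

theory Defs
  imports Main
begin

definition perfect_matching :: "'a set \<Rightarrow> 'a set set \<Rightarrow> 'a set set \<Rightarrow> bool" where
  "perfect_matching V E M \<longleftrightarrow> M \<subseteq> E \<and> (\<forall>v\<in>V. \<exists>!e. e \<in> M \<and> v \<in> e)"

definition is_cycle :: "'a set \<Rightarrow> 'a set set \<Rightarrow> 'a list \<Rightarrow> bool" where
  "is_cycle V E vs \<longleftrightarrow> length vs \<ge> 3 \<and> distinct vs \<and> set vs \<subseteq> V \<and>
     (\<forall>i < length vs. {vs ! i, vs ! ((i + 1) mod length vs)} \<in> E)"

definition cycle_edges :: "'a list \<Rightarrow> 'a set set" where
  "cycle_edges vs = {{vs ! i, vs ! ((i + 1) mod length vs)} | i. i < length vs}"

definition nice_cycle :: "'a set \<Rightarrow> 'a set set \<Rightarrow> 'a list \<Rightarrow> bool" where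
  "nice_cycle V E vs \<longleftrightarrow> is_cycle V E vs \<and>
     (\<exists>M. perfect_matching (V - set vs) {e \<in> E. e \<inter> set vs = {}} M)"

definition reach :: "'a set set \<Rightarrow> 'a \<Rightarrow> 'a \<Rightarrow> bool" where
  "reach F = (\<lambda>u v. {u, v} \<in> F)\<^sup>*\<^sup>*"

definition components :: "'a set \<Rightarrow> 'a set set \<Rightarrow> 'a set set" where
  "components V F = {{v \<in> V. reach F u v} | u. u \<in> V}"

definition e_cut :: "('a \<Rightarrow> bool) \<Rightarrow> 'a set \<Rightarrow> 'a set set \<Rightarrow> 'a set set \<Rightarrow> bool" where
  "e_cut blk V E D \<longleftrightarrow> (\<exists>V1 V2. V1 \<union> V2 = V \<and> V1 \<inter> V2 = {} \<and> V1 \<noteq> {} \<and> V2 \<noteq> {} \<and>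
     D = {e \<in> E. e \<inter> V1 \<noteq> {} \<and> e \<inter> V2 \<noteq> {}} \<and>
     card (components V (E - D)) = 2 \<and>
     (\<forall>e\<in>D. \<exists>b w. e = {b, w} \<and> b \<in> V1 \<and> w \<in> V2 \<and> blk b \<and> \<not> blk w))"

definition forcing_set :: "'a set \<Rightarrow> 'a set set \<Rightarrow> 'a set set \<Rightarrow> 'a set set \<Rightarrow> bool" where
  "forcing_set V E M S \<longleftrightarrow> S \<subseteq> M \<and>
     (\<forall>M'. perfect_matching V E M' \<and> S \<subseteq> M' \<longrightarrow> M' = M)"

definition complete_forcing_set :: "'a set \<Rightarrow> 'a set set \<Rightarrow> 'a set set \<Rightarrow> bool" where
  "complete_forcing_set V E S \<longleftrightarrow> S \<subseteq> E \<and>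
     (\<forall>M. perfect_matching V E M \<longrightarrow> forcing_set V E M (S \<inter> M))"

text \<open>This graph is isomorphic (as a plane graph)
  to the hexagonal lattice.\<close>

definition hex_edges :: "(int \<times> int) set set" where
  "hex_edges = {{(x, y), (x + 1, y)} | x y. True} \<union>
               {{(x, y), (x, y + 1)} | x y. even (x + y)}"

definition black :: "int \<times> int \<Rightarrow> bool" where
  "black v = even (fst v + snd v)"

text \<open>Hexagonal cells are indexed by their lower-left corner (a,b) with a+b even.\<close>
definition cell_verts :: "int \<times> int \<Rightarrow> (int \<times> int) set" where
  "cell_verts c = (case c of (a, b) \<Rightarrow>
     {(a, b), (a + 1, b), (a + 2, b), (a, b + 1), (a + 1, b + 1), (a + 2, b + 1)})"

definition cell_edges :: "int \<times> int \<Rightarrow> (int \<times> int) set set" where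
  "cell_edges c = (case c of (a, b) \<Rightarrow>
     {{(a, b), (a + 1, b)}, {(a + 1, b), (a + 2, b)},
      {(a, b + 1), (a + 1, b + 1)}, {(a + 1, b + 1), (a + 2, b + 1)},
      {(a, b), (a, b + 1)}, {(a + 2, b), (a + 2, b + 1)}})"

text \<open>A cell lies inside a lattice cycle iff the horizontal ray from its centre
  (a+1, b+1/2) to the right crosses the cycle an odd number of times.\<close>
definition cell_inside :: "(int \<times> int) list \<Rightarrow> int \<times> int \<Rightarrow> bool" where
  "cell_inside vs c = (case c of (a, b) \<Rightarrow> even (a + b) \<and>
     odd (card {a'. a' > a + 1 \<and> {(a', b), (a', b + 1)} \<in> cycle_edges vs}))"

text \<open>A hexagonal system: the subgraph of the hexagonal lattice consisting of a lattice
  cycle (its boundary) together with everything in its interior, i.e. the union of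
  the hexagonal cells inside the cycle.\<close>
definition hexagonal_system :: "(int \<times> int) set \<Rightarrow> (int \<times> int) set set \<Rightarrow> bool" where
  "hexagonal_system V E \<longleftrightarrow> (\<exists>vs. is_cycle UNIV hex_edges vs \<and>
     V = \<Union> (cell_verts ` {c. cell_inside vs c}) \<and>
     E = \<Union> (cell_edges ` {c. cell_inside vs c}))"

end

theory Submission
  imports Defs
begin


definition bip :: "('a \<Rightarrow> bool) \<Rightarrow> 'a set \<Rightarrow> 'a set set \<Rightarrow> bool" where
  "bip blk V E \<longleftrightarrow> (\<forall>e\<in>E. \<exists>u w. e = {u,w} \<and> u \<in> V \<and> w \<in> V \<and> blk u \<noteq> blk w)"

lemma partner:
  assumes pm: "perfect_matching V E M" and b: "bip blk V E" and v: "v \<in> V"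
  shows "\<exists>u. {v,u} \<in> M \<and> u \<in> V \<and> blk u \<noteq> blk v \<and> (\<forall>e\<in>M. v \<in> e \<longrightarrow> e = {v,u})"
proof -
  from pm v obtain e where e: "e \<in> M" "v \<in> e" and un: "\<forall>e'. e' \<in> M \<and> v \<in> e' \<longrightarrow> e' = e"
    unfolding perfect_matching_def by metis
  have "e \<in> E" using e pm unfolding perfect_matching_def by auto
  then obtain x y where xy: "e = {x,y}" "x \<in> V" "y \<in> V" "blk x \<noteq> blk y" using b unfolding bip_def by blast
  show ?thesis
  proof (cases "v = x")
    case True
    have ev: "e = {v,y}" using True xy by simp
    have 1: "{v,y} \<in> M" using e(1) ev by simp
    have 2: "\<forall>e'\<in>M. v \<in> e' \<longrightarrow> e' = {v,y}" using un ev by blast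
    have 3: "y \<in> V" "blk y \<noteq> blk v" using xy True by auto
    show ?thesis using 1 2 3 by blast
  next
    case False
    then have vy: "v = y" using e xy by auto
    then have ev: "e = {v,x}" using xy by auto
    have 1: "{v,x} \<in> M" using e(1) ev by simp
    have 2: "\<forall>e'\<in>M. v \<in> e' \<longrightarrow> e' = {v,x}" using un ev by blast
    have 3: "x \<in> V" "blk x \<noteq> blk v" using xy vy by auto
    show ?thesis using 1 2 3 by blast
  qed
qed

definition pt :: "'a set set \<Rightarrow> 'a \<Rightarrow> 'a" where
  "pt M v = (SOME u. {v,u} \<in> M \<and> (\<forall>e\<in>M. v \<in> e \<longrightarrow> e = {v,u}))"

lemma pt_props:
  assumes pm: "perfect_matching V E M" and b: "bip blk V E" and v: "v \<in> V"
  shows "{v, pt M v} \<in> M" "pt M v \<in> V" "blk (pt M v) \<noteq> blk v"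
    "\<forall>e\<in>M. v \<in> e \<longrightarrow> e = {v, pt M v}"
proof -
  obtain u where u: "{v,u} \<in> M" "u \<in> V" "blk u \<noteq> blk v" "\<forall>e\<in>M. v \<in> e \<longrightarrow> e = {v,u}"
    using partner[OF pm b v] by blast
  have ex: "\<exists>u. {v,u} \<in> M \<and> (\<forall>e\<in>M. v \<in> e \<longrightarrow> e = {v,u})" using u by blast
  have h: "{v, pt M v} \<in> M \<and> (\<forall>e\<in>M. v \<in> e \<longrightarrow> e = {v, pt M v})"
    unfolding pt_def by (rule someI_ex[OF ex])
  have "{v, pt M v} = {v,u}" using u(4) h by (meson insertI1)
  then have pu: "pt M v = u" by (auto simp: doubleton_eq_iff)
  show "{v, pt M v} \<in> M" "\<forall>e\<in>M. v \<in> e \<longrightarrow> e = {v, pt M v}" using h by blast+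
  show "pt M v \<in> V" "blk (pt M v) \<noteq> blk v" using u(2,3) pu by blast+
qed

lemma pt_uniq:
  assumes pm: "perfect_matching V E M" and b: "bip blk V E" and v: "v \<in> V" and "{v,u} \<in> M"
  shows "u = pt M v"
proof -
  have "{v,u} = {v, pt M v}" using pt_props(4)[OF pm b v] assms(4) by (meson insertI1)
  then show ?thesis by (auto simp: doubleton_eq_iff)
qed

lemma pt_inv:
  assumes pm: "perfect_matching V E M" and b: "bip blk V E" and v: "v \<in> V"
  shows "pt M (pt M v) = v"
proof -
  have "{pt M v, v} \<in> M" using pt_props(1)[OF pm b v] by (simp add: insert_commute)
  then show ?thesis using pt_uniq[OF pm b pt_props(2)[OF pm b v]] by metis
qed


lemma funpow_cancel:
  assumes "\<forall>x\<in>V. f x \<in> V" "inj_on f V"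
  shows "x \<in> V \<Longrightarrow> y \<in> V \<Longrightarrow> (f^^i) x = (f^^i) y \<Longrightarrow> x = y"
proof (induction i arbitrary: x y)
  case 0
  then show ?case by simp
next
  case (Suc i)
  have "(f^^i) (f x) = (f^^i) (f y)" using Suc.prems(3) by (simp add: funpow_swap1)
  then have "f x = f y" using Suc.IH Suc.prems assms(1) by blast
  then show ?case using assms(2) Suc.prems by (meson inj_onD)
qed

lemma funpow_in:
  assumes "\<forall>x\<in>V. f x \<in> V" "x \<in> V"
  shows "(f^^i) x \<in> V"
  using assms by (induction i) auto

lemma orbit_period:
  assumes fin: "finite V" and cl: "\<forall>x\<in>V. f x \<in> V" and inj: "inj_on f V" and v: "v \<in> V"
  shows "\<exists>k>0. (f^^k) v = v \<and> (\<forall>j. 0 < j \<and> j < k \<longrightarrow> (f^^j) v \<noteq> v)"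
proof -
  have "range (\<lambda>i. (f^^i) v) \<subseteq> V" using funpow_in[OF cl v] by auto
  then have "finite (range (\<lambda>i. (f^^i) v))" using fin finite_subset by blast
  then have "\<not> inj (\<lambda>i. (f^^i) v)" using finite_imageD infinite_UNIV_nat by blast
  then obtain i j where ij: "i \<noteq> j" "(f^^i) v = (f^^j) v" unfolding inj_on_def by blast
  have "\<exists>k>0. (f^^k) v = v"
  proof -
    {
      fix a b assume ab: "a < b" "(f^^a) v = (f^^b) v"
      have "(f^^b) v = (f^^a) ((f^^(b-a)) v)" using ab(1)
        by (metis funpow_add le_add_diff_inverse less_imp_le o_apply)
      then have "(f^^(b-a)) v = v"
        using funpow_cancel[OF cl inj, of v "(f^^(b-a)) v" a] ab(2) funpow_in[OF cl v] v by metis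
      then have "\<exists>k>0. (f^^k) v = v" using ab(1) by (intro exI[of _ "b-a"]) auto
    }
    then show ?thesis using ij by (metis linorder_neqE_nat)
  qed
  then have ex: "\<exists>k. 0 < k \<and> (f^^k) v = v" by blast
  define k where "k = (LEAST k. 0 < k \<and> (f^^k) v = v)"
  have k: "0 < k \<and> (f^^k) v = v" unfolding k_def by (rule LeastI_ex[OF ex])
  have "\<forall>j. 0 < j \<and> j < k \<longrightarrow> (f^^j) v \<noteq> v"
    unfolding k_def using not_less_Least by blast
  then show ?thesis using k by blast
qed

lemma per_bool:
  fixes s :: "nat \<Rightarrow> bool"
  assumes per: "\<And>j. s (j + n) = s j" and n: "n > 0" and a: "s a" and b: "\<not> s b"
  shows "\<exists>j. s j \<and> \<not> s (Suc j)"
proof (rule ccontr)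
  assume "\<not> ?thesis"
  then have st: "\<And>j. s j \<Longrightarrow> s (Suc j)" by blast
  have up: "s (a + m)" for m by (induction m) (use a st in auto)
  have pt: "s (b + t * n) = s b" for t
  proof (induction t)
    case 0 then show ?case by simp
  next
    case (Suc t)
    have "b + Suc t * n = (b + t * n) + n" by simp
    then show ?case using per Suc by metis
  qed
  have "a \<le> a * n" using n by simp
  then have "a \<le> b + a * n" by linarith
  then have "s (b + a * n)" using up[of "b + a * n - a"] by simp
  then show False using pt b by simp
qed

lemma main_graph:
  fixes blk :: "'a \<Rightarrow> bool"
  assumes fin: "finite V" and b: "bip blk V E"
    and ec: "\<forall>D\<in>\<D>. e_cut blk V E D"
    and nc: "\<forall>vs. nice_cycle V E vs \<longrightarrow> (\<exists>D\<in>\<D>. cycle_edges vs \<inter> D \<noteq> {})"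
    and pm: "perfect_matching V E M" and pm': "perfect_matching V E M'"
    and sub: "\<Union>\<D> \<inter> M \<subseteq> M'"
  shows "M' = M"
proof (rule ccontr)
  assume ne: "M' \<noteq> M"
  define p where "p = pt M"
  define q where "q = pt M'"
  have p1: "\<And>v. v \<in> V \<Longrightarrow> {v, p v} \<in> M" unfolding p_def by (rule pt_props(1)[OF pm b])
  have p2: "\<And>v. v \<in> V \<Longrightarrow> p v \<in> V" unfolding p_def by (rule pt_props(2)[OF pm b])
  have p3: "\<And>v. v \<in> V \<Longrightarrow> blk (p v) \<noteq> blk v" unfolding p_def by (rule pt_props(3)[OF pm b])
  have p4: "\<And>v e. v \<in> V \<Longrightarrow> e \<in> M \<Longrightarrow> v \<in> e \<Longrightarrow> e = {v, p v}"
    unfolding p_def using pt_props(4)[OF pm b] by blast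
  have p5: "\<And>v. v \<in> V \<Longrightarrow> p (p v) = v" unfolding p_def by (rule pt_inv[OF pm b])
  have p6: "\<And>v u. v \<in> V \<Longrightarrow> {v,u} \<in> M \<Longrightarrow> u = p v" unfolding p_def by (rule pt_uniq[OF pm b])
  have q1: "\<And>v. v \<in> V \<Longrightarrow> {v, q v} \<in> M'" unfolding q_def by (rule pt_props(1)[OF pm' b])
  have q2: "\<And>v. v \<in> V \<Longrightarrow> q v \<in> V" unfolding q_def by (rule pt_props(2)[OF pm' b])
  have q3: "\<And>v. v \<in> V \<Longrightarrow> blk (q v) \<noteq> blk v" unfolding q_def by (rule pt_props(3)[OF pm' b])
  have q4: "\<And>v e. v \<in> V \<Longrightarrow> e \<in> M' \<Longrightarrow> v \<in> e \<Longrightarrow> e = {v, q v}"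
    unfolding q_def using pt_props(4)[OF pm' b] by blast
  have q5: "\<And>v. v \<in> V \<Longrightarrow> q (q v) = v" unfolding q_def by (rule pt_inv[OF pm' b])
  have q6: "\<And>v u. v \<in> V \<Longrightarrow> {v,u} \<in> M' \<Longrightarrow> u = q v" unfolding q_def by (rule pt_uniq[OF pm' b])
  have ME: "M \<subseteq> E" and M'E: "M' \<subseteq> E" using pm pm' unfolding perfect_matching_def by auto
  have Ebip: "\<And>e. e \<in> E \<Longrightarrow> \<exists>u w. e = {u,w} \<and> u \<in> V \<and> w \<in> V \<and> blk u \<noteq> blk w"
    using b unfolding bip_def by blast
  have "\<not> M \<subseteq> M'"
  proof
    assume MM: "M \<subseteq> M'"
    have "M' \<subseteq> M"
    proof
      fix e assume e: "e \<in> M'"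
      then obtain u w where uw: "e = {u,w}" "u \<in> V" using Ebip M'E by blast
      have "{u, p u} \<in> M'" using MM p1[OF uw(2)] by blast
      then have "{u, p u} = {u, q u}" using q4[OF uw(2)] by blast
      moreover have "e = {u, q u}" using q4[OF uw(2) e] uw by blast
      ultimately show "e \<in> M" using p1[OF uw(2)] by simp
    qed
    then show False using MM ne by blast
  qed
  then obtain e where e: "e \<in> M" "e \<notin> M'" by blast
  then obtain v0 w0 where "e = {v0,w0}" "v0 \<in> V" using Ebip ME by blast
  then have v0: "v0 \<in> V" and ev0: "e = {v0, p v0}" using p4[of v0 e] e by blast+
  define \<sigma> where "\<sigma> = (\<lambda>x. q (p x))"
  have sV: "\<forall>x\<in>V. \<sigma> x \<in> V" unfolding \<sigma>_def using p2 q2 by blast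
  have sblk: "\<And>x. x \<in> V \<Longrightarrow> blk (\<sigma> x) = blk x" unfolding \<sigma>_def using p2 p3 q3 by blast
  have sinj: "inj_on \<sigma> V"
  proof (rule inj_onI)
    fix x y assume xy: "x \<in> V" "y \<in> V" "\<sigma> x = \<sigma> y"
    then have "q (q (p x)) = q (q (p y))" unfolding \<sigma>_def by simp
    then have "p x = p y" using q5 p2 xy by metis
    then show "x = y" using p5 xy by metis
  qed
  obtain k where k: "k > 0" "(\<sigma>^^k) v0 = v0" "\<forall>j. 0 < j \<and> j < k \<longrightarrow> (\<sigma>^^j) v0 \<noteq> v0"
    using orbit_period[OF fin sV sinj v0] by blast
  have orbV: "\<And>i. (\<sigma>^^i) v0 \<in> V" using funpow_in[OF sV v0] by blast
  have orbblk: "\<And>i. blk ((\<sigma>^^i) v0) = blk v0"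
  proof -
    fix i show "blk ((\<sigma>^^i) v0) = blk v0"
      by (induction i) (use sblk orbV in auto)
  qed
  have cancel: "\<And>i x y. x \<in> V \<Longrightarrow> y \<in> V \<Longrightarrow> (\<sigma>^^i) x = (\<sigma>^^i) y \<Longrightarrow> x = y"
    using funpow_cancel[OF sV sinj] by blast
  have s0: "\<sigma> v0 \<noteq> v0"
  proof
    assume "\<sigma> v0 = v0"
    then have "q (q (p v0)) = q v0" unfolding \<sigma>_def by simp
    then have "p v0 = q v0" using q5 p2 v0 by metis
    then show False using q1[OF v0] e ev0 by simp
  qed
  have nofix: "\<And>i. \<sigma> ((\<sigma>^^i) v0) \<noteq> (\<sigma>^^i) v0"
  proof
    fix i assume "\<sigma> ((\<sigma>^^i) v0) = (\<sigma>^^i) v0"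
    then have "(\<sigma>^^i) (\<sigma> v0) = (\<sigma>^^i) v0" by (simp add: funpow_swap1)
    then show False using cancel[of "\<sigma> v0" v0 i] sV v0 s0 by blast
  qed
  have k2: "k \<ge> 2"
  proof (rule ccontr)
    assume "\<not> k \<ge> 2"
    then have "k = 1" using k(1) by simp
    then show False using k(2) s0 by simp
  qed
  have dist0: "\<And>i j. i < j \<Longrightarrow> j < k \<Longrightarrow> (\<sigma>^^i) v0 \<noteq> (\<sigma>^^j) v0"
  proof
    fix i j assume ij: "i < j" "j < k" "(\<sigma>^^i) v0 = (\<sigma>^^j) v0"
    have "(\<sigma>^^j) v0 = (\<sigma>^^i) ((\<sigma>^^(j-i)) v0)" using ij(1)
      by (metis funpow_add le_add_diff_inverse less_imp_le o_apply)
    then have "(\<sigma>^^(j-i)) v0 = v0" using cancel[of "(\<sigma>^^(j-i)) v0" v0 i] orbV v0 ij(3) by metis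
    then show False using k(3) ij by auto
  qed
  have dist: "\<And>i j. i < k \<Longrightarrow> j < k \<Longrightarrow> (\<sigma>^^i) v0 = (\<sigma>^^j) v0 \<Longrightarrow> i = j"
    using dist0 by (metis linorder_neqE_nat)
  have per: "\<And>i. (\<sigma>^^(i+k)) v0 = (\<sigma>^^i) v0"
    using k(2) by (simp add: funpow_add)
  define g where "g j = (if even j then (\<sigma>^^(j div 2)) v0 else p ((\<sigma>^^(j div 2)) v0))" for j
  have gV: "\<And>j. g j \<in> V" unfolding g_def using orbV p2 by auto
  have gblk: "\<And>j. blk (g j) = (blk v0 = even j)"
    unfolding g_def using orbblk p3 orbV by auto
  have gper: "\<And>j. g (j + 2*k) = g j"
  proof -
    fix j :: nat
    have "(j + 2*k) div 2 = j div 2 + k" by simp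
    moreover have "(\<sigma>^^(k + j div 2)) v0 = (\<sigma>^^(j div 2)) v0" using per[of "j div 2"] by (simp add: add.commute)
    ultimately show "g (j + 2*k) = g j" unfolding g_def using per[of "j div 2"] by simp
  qed
  have gM: "\<And>j. even j \<Longrightarrow> {g j, g (Suc j)} \<in> M"
    and gM': "\<And>j. even j \<Longrightarrow> {g j, g (Suc j)} \<notin> M'"
    and gM'': "\<And>j. odd j \<Longrightarrow> {g j, g (Suc j)} \<in> M'"
  proof -
    fix j :: nat assume j: "even j"
    have "Suc j div 2 = j div 2" using j by presburger
    then have gs: "g (Suc j) = p (g j)" unfolding g_def using j by simp
    have gj: "g j = (\<sigma>^^(j div 2)) v0" unfolding g_def using j by simp
    show "{g j, g (Suc j)} \<in> M" using gs p1 gV by simp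
    show "{g j, g (Suc j)} \<notin> M'"
    proof
      assume "{g j, g (Suc j)} \<in> M'"
      then have "p (g j) = q (g j)" using q6 gV gs by metis
      then have "\<sigma> (g j) = g j" unfolding \<sigma>_def using q5 gV by metis
      then show False using nofix gj by metis
    qed
  next
    fix j :: nat assume j: "odd j"
    have "Suc j div 2 = Suc (j div 2)" using j by presburger
    then have "g (Suc j) = \<sigma> ((\<sigma>^^(j div 2)) v0)" unfolding g_def using j by simp
    also have "\<dots> = q (g j)" unfolding g_def \<sigma>_def using j by simp
    finally show "{g j, g (Suc j)} \<in> M'" using q1 gV by simp
  qed
  have gE: "\<And>j. {g j, g (Suc j)} \<in> E" using gM gM'' ME M'E by blast
  define n where "n = 2*k"
  have n3: "n \<ge> 3" using k2 unfolding n_def by simp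
  have ginj: "inj_on g {..<n}"
  proof (rule inj_onI)
    fix i j assume ij: "i \<in> {..<n}" "j \<in> {..<n}" "g i = g j"
    have par: "even i = even j" using gblk ij(3) by metis
    have ik: "i div 2 < k" "j div 2 < k" using ij(1,2) unfolding n_def by auto
    show "i = j"
    proof (cases "even i")
      case True
      then have "(\<sigma>^^(i div 2)) v0 = (\<sigma>^^(j div 2)) v0" using par ij(3) unfolding g_def by simp
      then have "i div 2 = j div 2" using dist ik by blast
      then show ?thesis using True par by (metis dvd_mult_div_cancel)
    next
      case False
      then have "p ((\<sigma>^^(i div 2)) v0) = p ((\<sigma>^^(j div 2)) v0)" using par ij(3) unfolding g_def by simp
      then have "(\<sigma>^^(i div 2)) v0 = (\<sigma>^^(j div 2)) v0" using p5 orbV by metis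
      then have "i div 2 = j div 2" using dist ik by blast
      then show ?thesis using False par by (metis odd_two_times_div_two_succ)
    qed
  qed
  have gp: "\<And>j. j < n \<Longrightarrow> p (g j) \<in> g ` {..<n}"
  proof -
    fix j :: nat assume j: "j < n"
    show "p (g j) \<in> g ` {..<n}"
    proof (cases "even j")
      case True
      have "Suc j div 2 = j div 2" using True by presburger
      then have gs: "g (Suc j) = p (g j)" unfolding g_def using True by simp
      have "Suc j < n" using True j unfolding n_def by presburger
      then show ?thesis using gs by (metis imageI lessThan_iff)
    next
      case False
      then have j1: "j = Suc (j - 1)" "even (j - 1)" by presburger+
      have "(j - 1) div 2 = j div 2" using False by presburger
      then have "p (g j) = g (j - 1)" unfolding g_def using False j1 p5 orbV by simp
      moreover have "j - 1 < n" using j by simp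
      ultimately show ?thesis by blast
    qed
  qed
  define vs where "vs = map g [0..<n]"
  have len: "length vs = n" unfolding vs_def by simp
  have nth: "\<And>i. i < n \<Longrightarrow> vs ! i = g i" unfolding vs_def by simp
  have setvs: "set vs = g ` {..<n}" unfolding vs_def by auto
  have nxt: "\<And>i. i < n \<Longrightarrow> vs ! ((i+1) mod n) = g (Suc i)"
  proof -
    fix i :: nat assume i: "i < n"
    show "vs ! ((i+1) mod n) = g (Suc i)"
    proof (cases "Suc i < n")
      case True
      then show ?thesis using nth by simp
    next
      case False
      then have "Suc i = n" using i by simp
      then show ?thesis using nth[of 0] gper[of 0] n3 unfolding n_def by simp
    qed
  qed
  have cyc: "is_cycle V E vs"
    unfolding is_cycle_def
  proof (intro conjI allI impI)
    show "3 \<le> length vs" using len n3 by simp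
    show "distinct vs" unfolding vs_def using ginj by (simp add: distinct_map atLeast_upt)
    show "set vs \<subseteq> V" using setvs gV by auto
    fix i assume "i < length vs"
    then show "{vs ! i, vs ! ((i + 1) mod length vs)} \<in> E" using nth nxt len gE by simp
  qed
  have nice: "nice_cycle V E vs"
    unfolding nice_cycle_def
  proof (intro conjI)
    show "is_cycle V E vs" by (rule cyc)
    define M0 where "M0 = {e \<in> M. e \<inter> set vs = {}}"
    have "perfect_matching (V - set vs) {e \<in> E. e \<inter> set vs = {}} M0"
      unfolding perfect_matching_def
    proof (intro conjI ballI)
      show "M0 \<subseteq> {e \<in> E. e \<inter> set vs = {}}" unfolding M0_def using ME by blast
      fix v assume v: "v \<in> V - set vs"
      have pv: "p v \<notin> set vs"
      proof
        assume "p v \<in> set vs"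
        then obtain j where j: "j < n" "p v = g j" using setvs by auto
        then have "v = p (g j)" using p5[OF DiffD1[OF v]] by simp
        then show False using gp[OF j(1)] setvs v by auto
      qed
      have in0: "{v, p v} \<in> M0" unfolding M0_def using p1 v pv by auto
      show "\<exists>!e. e \<in> M0 \<and> v \<in> e"
      proof (rule ex1I[of _ "{v, p v}"])
        show "{v, p v} \<in> M0 \<and> v \<in> {v, p v}" using in0 by simp
        fix e assume "e \<in> M0 \<and> v \<in> e"
        then show "e = {v, p v}" using p4 v unfolding M0_def by blast
      qed
    qed
    then show "\<exists>M. perfect_matching (V - set vs) {e \<in> E. e \<inter> set vs = {}} M" by blast
  qed
  obtain D where D: "D \<in> \<D>" "cycle_edges vs \<inter> D \<noteq> {}" using nc nice by blast
  then obtain ed where ed: "ed \<in> cycle_edges vs" "ed \<in> D" by blast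
  then obtain j0 where j0': "j0 < n" "ed = {vs ! j0, vs ! ((j0+1) mod n)}"
    unfolding cycle_edges_def len by blast
  then have "ed = {g j0, g (Suc j0)}" using nth[OF j0'(1)] nxt[OF j0'(1)] by simp
  then have j0: "j0 < n" "{g j0, g (Suc j0)} \<in> D" using j0' ed by auto
  obtain V1 V2 where V12: "V1 \<union> V2 = V" "V1 \<inter> V2 = {}"
    and Ddef: "D = {e \<in> E. e \<inter> V1 \<noteq> {} \<and> e \<inter> V2 \<noteq> {}}"
    and Dbw: "\<forall>e\<in>D. \<exists>b w. e = {b, w} \<and> b \<in> V1 \<and> w \<in> V2 \<and> blk b \<and> \<not> blk w"
  proof -
    have "e_cut blk V E D" using ec D(1) by blast
    then show ?thesis unfolding e_cut_def by (elim exE conjE) (rule that, assumption+)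
  qed
  define s where "s j = (g j \<in> V1)" for j
  have sV2: "\<And>j. (\<not> s j) = (g j \<in> V2)" unfolding s_def using V12 gV by blast
  have sper: "\<And>j. s (j + n) = s j" unfolding s_def n_def using gper by simp
  have crossD: "\<And>j. s j \<noteq> s (Suc j) \<Longrightarrow> {g j, g (Suc j)} \<in> D"
  proof -
    fix j :: nat assume "s j \<noteq> s (Suc j)"
    then have "{g j, g (Suc j)} \<inter> V1 \<noteq> {}" "{g j, g (Suc j)} \<inter> V2 \<noteq> {}"
      using sV2[of j] sV2[of "Suc j"] unfolding s_def by auto
    then show "{g j, g (Suc j)} \<in> D" unfolding Ddef using gE by blast
  qed
  have Dcross: "s j0 \<noteq> s (Suc j0)"
  proof -
    have "{g j0, g (Suc j0)} \<inter> V1 \<noteq> {}" "{g j0, g (Suc j0)} \<inter> V2 \<noteq> {}"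
      using j0(2) unfolding Ddef by auto
    then show ?thesis using sV2[of j0] sV2[of "Suc j0"] V12(2) unfolding s_def by auto
  qed
  have fwd: "\<And>j. s j \<Longrightarrow> \<not> s (Suc j) \<Longrightarrow> blk (g j)"
  proof -
    fix j :: nat assume j: "s j" "\<not> s (Suc j)"
    then have "{g j, g (Suc j)} \<in> D" using crossD by blast
    then obtain bb ww where bw: "{g j, g (Suc j)} = {bb, ww}" "bb \<in> V1" "blk bb" using Dbw by blast
    have "g (Suc j) \<notin> V1" using j(2) unfolding s_def by simp
    moreover have "bb \<in> {g j, g (Suc j)}" using bw(1) by (metis insertI1)
    ultimately have "bb = g j" using bw(2) by blast
    then show "blk (g j)" using bw by simp
  qed
  have bwd: "\<And>j. \<not> s j \<Longrightarrow> s (Suc j) \<Longrightarrow> blk (g (Suc j))"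
  proof -
    fix j :: nat assume j: "\<not> s j" "s (Suc j)"
    then have "{g j, g (Suc j)} \<in> D" using crossD by blast
    then obtain bb ww where bw: "{g j, g (Suc j)} = {bb, ww}" "bb \<in> V1" "blk bb" using Dbw by blast
    have "g j \<notin> V1" using j(1) unfolding s_def by simp
    moreover have "bb \<in> {g j, g (Suc j)}" using bw(1) by (metis insertI1)
    ultimately have "bb = g (Suc j)" using bw(2) by blast
    then show "blk (g (Suc j))" using bw by simp
  qed
  have npos: "n > 0" using n3 by simp
  have ex_a: "\<exists>a. s a" and ex_b: "\<exists>a. \<not> s a" using Dcross by blast+
  obtain jf where jf: "s jf" "\<not> s (Suc jf)" using per_bool[of s n] sper npos ex_a ex_b by blast
  obtain jb where jb: "\<not> s jb" "s (Suc jb)"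
    using per_bool[of "\<lambda>j. \<not> s j" n] sper npos ex_a ex_b by blast
  have bf: "blk (g jf)" using fwd jf by blast
  have bb: "blk (g (Suc jb))" using bwd jb by blast
  have "even jf \<or> even jb" using bf bb gblk[of jf] gblk[of "Suc jb"] by auto
  then show False
  proof
    assume ev: "even jf"
    have "{g jf, g (Suc jf)} \<in> \<Union>\<D> \<inter> M" using crossD jf gM[OF ev] D(1) by blast
    then show False using sub gM'[OF ev] by blast
  next
    assume ev: "even jb"
    have "{g jb, g (Suc jb)} \<in> \<Union>\<D> \<inter> M" using crossD jb gM[OF ev] D(1) by blast
    then show False using sub gM'[OF ev] by blast
  qed
qed



lemma cell_edge_bip:
  assumes "e \<in> cell_edges c"
  shows "\<exists>u w. e = {u,w} \<and> u \<in> cell_verts c \<and> w \<in> cell_verts c \<and> black u \<noteq> black w"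
proof -
  obtain a b where c: "c = (a,b)" by fastforce
  from assms have "e = {(a,b),(a+1,b)} \<or> e = {(a+1,b),(a+2,b)} \<or> e = {(a,b+1),(a+1,b+1)} \<or>
     e = {(a+1,b+1),(a+2,b+1)} \<or> e = {(a,b),(a,b+1)} \<or> e = {(a+2,b),(a+2,b+1)}"
    unfolding c cell_edges_def by simp
  then show ?thesis unfolding c cell_verts_def black_def
    by (elim disjE) (rule exI, rule exI, rule conjI, assumption, simp; presburger)+
qed

lemma next_mod: "i < (n::nat) \<Longrightarrow> (i+1) mod n = (if i+1 = n then 0 else i+1)"
  by auto

lemma cyc_parity:
  fixes f :: "nat \<Rightarrow> bool"
  assumes n: "n > 0"
  shows "even (card {i. i < n \<and> f i \<noteq> f ((i+1) mod n)})"
proof -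
  define h where "h i = (if f i then 1 else 0::nat)" for i
  define c where "c i = (if f i \<noteq> f ((i+1) mod n) then 1 else 0::nat)" for i
  define d where "d i = (if f i \<and> f ((i+1) mod n) then 1 else 0::nat)" for i
  have cd: "c i + 2 * d i = h i + h ((i+1) mod n)" for i
    unfolding c_def d_def h_def by auto
  have rot: "(\<Sum>i<n. h ((i+1) mod n)) = (\<Sum>i<n. h i)"
  proof -
    obtain m where m: "n = Suc m" using n by (cases n) auto
    have "(\<Sum>i<n. h ((i+1) mod n)) = (\<Sum>i<m. h ((i+1) mod n)) + h ((m+1) mod n)"
      unfolding m by simp
    also have "(\<Sum>i<m. h ((i+1) mod n)) = (\<Sum>i<m. h (Suc i))"
      by (rule sum.cong) (auto simp: m)
    also have "h ((m+1) mod n) = h 0" using m by simp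
    also have "(\<Sum>i<m. h (Suc i)) + h 0 = (\<Sum>i<n. h i)"
      unfolding m by (subst sum.lessThan_Suc_shift) simp
    finally show ?thesis .
  qed
  have "(\<Sum>i<n. c i) + 2 * (\<Sum>i<n. d i) = (\<Sum>i<n. h i) + (\<Sum>i<n. h ((i+1) mod n))"
  proof -
    have "(\<Sum>i<n. c i + 2 * d i) = (\<Sum>i<n. h i + h ((i+1) mod n))"
      by (rule sum.cong) (simp_all add: cd)
    then show ?thesis by (simp add: sum.distrib sum_distrib_left)
  qed
  then have "(\<Sum>i<n. c i) + 2 * (\<Sum>i<n. d i) = 2 * (\<Sum>i<n. h i)" using rot by simp
  then have "even ((\<Sum>i<n. c i) + 2 * (\<Sum>i<n. d i))" by simp
  then have ev: "even (\<Sum>i<n. c i)" by simp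
  have "card {i. i < n \<and> f i \<noteq> f ((i+1) mod n)} = (\<Sum>i<n. c i)"
  proof -
    have "{i. i < n \<and> f i \<noteq> f ((i+1) mod n)} = {i \<in> {..<n}. f i \<noteq> f ((i+1) mod n)}" by auto
    then have "card {i. i < n \<and> f i \<noteq> f ((i+1) mod n)} = (\<Sum>i\<in>{i \<in> {..<n}. f i \<noteq> f ((i+1) mod n)}. (1::nat))"
      by (simp only: card_eq_sum)
    also have "\<dots> = (\<Sum>i<n. c i)" by (subst sum.inter_filter) (auto simp: c_def)
    finally show ?thesis .
  qed
  then show ?thesis using ev by simp
qed

lemma edge_inj:
  assumes d: "distinct vs" and l: "length vs \<ge> 3" and i: "i < length vs" and j: "j < length vs"
    and eq: "{vs ! i, vs ! ((i+1) mod length vs)} = {vs ! j, vs ! ((j+1) mod length vs)}"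
  shows "i = j"
proof -
  let ?n = "length vs"
  have np: "?n > 0" using i by linarith
  have i1: "(i+1) mod ?n < ?n" "(j+1) mod ?n < ?n" using np by simp_all
  from eq have "vs ! i = vs ! j \<or> (vs ! i = vs ! ((j+1) mod ?n) \<and> vs ! ((i+1) mod ?n) = vs ! j)"
    by (auto simp: doubleton_eq_iff)
  then show ?thesis
  proof
    assume "vs ! i = vs ! j" then show ?thesis using d i j by (simp add: nth_eq_iff_index_eq)
  next
    assume h: "vs ! i = vs ! ((j+1) mod ?n) \<and> vs ! ((i+1) mod ?n) = vs ! j"
    have e1: "i = (j+1) mod ?n" using nth_eq_iff_index_eq[OF d i i1(2)] h by blast
    have e2': "(i+1) mod ?n = j" using nth_eq_iff_index_eq[OF d i1(1) j] h by blast
    have e2: "j = (i+1) mod ?n" using e2' by (rule sym)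
    have a: "i = (if j+1 = ?n then 0 else j+1)" using e1 next_mod[OF j] by (rule trans)
    have b: "j = (if i+1 = ?n then 0 else i+1)" using e2 next_mod[OF i] by (rule trans)
    show ?thesis
    proof (cases "j+1 = ?n")
      case True
      then have "i = 0" using a by simp
      then show ?thesis using b True l by simp
    next
      case False
      then have "i = j+1" using a by simp
      then show ?thesis using b l by (cases "i+1 = ?n") simp_all
    qed
  qed
qed

lemma hex_vert:
  assumes "{u,w} \<in> hex_edges" and "(snd u \<le> b) \<noteq> (snd w \<le> b)"
  shows "{u,w} = {(fst u, b), (fst u, b+1)}"
proof -
  from assms(1) consider (h) x y where "{u,w} = {(x,y),(x+1,y)}" | (v) x y where "{u,w} = {(x,y),(x,y+1)}"
    unfolding hex_edges_def by blast
  then show ?thesis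
  proof cases
    case h
    then have "(u = (x,y) \<and> w = (x+1,y)) \<or> (u = (x+1,y) \<and> w = (x,y))" by (simp only: doubleton_eq_iff)
    then have "snd u = snd w" by auto
    then show ?thesis using assms(2) by simp
  next
    case v
    then have "(u = (x,y) \<and> w = (x,y+1)) \<or> (u = (x,y+1) \<and> w = (x,y))" by (simp only: doubleton_eq_iff)
    then show ?thesis
    proof
      assume uw: "u = (x,y) \<and> w = (x,y+1)"
      then have "y = b" using assms(2) by auto
      then show ?thesis using uw by simp
    next
      assume uw: "u = (x,y+1) \<and> w = (x,y)"
      then have "y = b" using assms(2) by auto
      then show ?thesis using uw by auto

    qed
  qed
qed


lemma cyc_edge_mem:
  assumes "{u,w} \<in> cycle_edges vs"
  shows "u \<in> set vs"
proof -
  obtain i where i: "i < length vs" "{u,w} = {vs ! i, vs ! ((i+1) mod length vs)}"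
    using assms unfolding cycle_edges_def by blast
  have "length vs > 0" using i(1) by linarith
  then have "(i+1) mod length vs < length vs" by simp
  then have "vs ! ((i+1) mod length vs) \<in> set vs" "vs ! i \<in> set vs" using i(1) by simp_all
  moreover have "u \<in> {vs ! i, vs ! ((i+1) mod length vs)}" using i(2) by (metis insertI1)
  ultimately show ?thesis by blast
qed

lemma Sb_even:
  assumes cyc: "is_cycle UNIV hex_edges vs"
  shows "even (card {x. {(x,b),(x,b+1)} \<in> cycle_edges vs})"
proof -
  let ?n = "length vs"
  have n3: "?n \<ge> 3" and dist: "distinct vs"
    and edg: "\<And>i. i < ?n \<Longrightarrow> {vs ! i, vs ! ((i+1) mod ?n)} \<in> hex_edges"
    using cyc unfolding is_cycle_def by auto
  define f where "f i = (snd (vs ! i) \<le> b)" for i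
  define A where "A = {i. i < ?n \<and> f i \<noteq> f ((i+1) mod ?n)}"
  define F where "F i = fst (vs ! i)" for i
  have np: "?n > 0" using n3 by linarith
  have evA: "even (card A)" unfolding A_def by (rule cyc_parity[OF np])
  have img: "{x. {(x,b),(x,b+1)} \<in> cycle_edges vs} = F ` A"
  proof
    show "{x. {(x,b),(x,b+1)} \<in> cycle_edges vs} \<subseteq> F ` A"
    proof
      fix x assume "x \<in> {x. {(x,b),(x,b+1)} \<in> cycle_edges vs}"
      then obtain i where i: "i < ?n" "{(x,b),(x,b+1)} = {vs ! i, vs ! ((i+1) mod ?n)}"
        unfolding cycle_edges_def by auto
      then have "(vs ! i = (x,b) \<and> vs ! ((i+1) mod ?n) = (x,b+1)) \<or> (vs ! i = (x,b+1) \<and> vs ! ((i+1) mod ?n) = (x,b))"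
        by (simp only: doubleton_eq_iff) (metis)
      then have "f i \<noteq> f ((i+1) mod ?n) \<and> F i = x" unfolding f_def F_def by auto
      then show "x \<in> F ` A" unfolding A_def using i(1) by blast
    qed
  next
    show "F ` A \<subseteq> {x. {(x,b),(x,b+1)} \<in> cycle_edges vs}"
    proof
      fix x assume "x \<in> F ` A"
      then obtain i where i: "i < ?n" "f i \<noteq> f ((i+1) mod ?n)" "x = F i" unfolding A_def by auto
      have "{vs ! i, vs ! ((i+1) mod ?n)} = {(F i, b), (F i, b+1)}"
        using hex_vert[OF edg[OF i(1)]] i(2) unfolding f_def F_def by blast
      then have "{(x,b),(x,b+1)} \<in> cycle_edges vs" unfolding cycle_edges_def using i by auto
      then show "x \<in> {x. {(x,b),(x,b+1)} \<in> cycle_edges vs}" by simp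
    qed
  qed
  have inj: "inj_on F A"
  proof (rule inj_onI)
    fix i j assume ij: "i \<in> A" "j \<in> A" "F i = F j"
    have ei: "{vs ! i, vs ! ((i+1) mod ?n)} = {(F i, b), (F i, b+1)}"
      using hex_vert[OF edg] ij(1) unfolding A_def f_def F_def by blast
    have ej: "{vs ! j, vs ! ((j+1) mod ?n)} = {(F j, b), (F j, b+1)}"
      using hex_vert[OF edg] ij(2) unfolding A_def f_def F_def by blast
    have "{vs ! i, vs ! ((i+1) mod ?n)} = {vs ! j, vs ! ((j+1) mod ?n)}" using ei ej ij(3) by simp
    then show "i = j" using edge_inj[OF dist n3] ij(1,2) unfolding A_def by blast
  qed
  show ?thesis unfolding img using card_image[OF inj] evA by simp
qed

lemma inside_finite:
  assumes cyc: "is_cycle UNIV hex_edges vs"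
  shows "finite {c. cell_inside vs c}"
proof -
  define X where "X = fst ` set vs"
  define Y where "Y = snd ` set vs"
  have ne: "X \<noteq> {}" using cyc unfolding is_cycle_def X_def by auto
  have fX: "finite X" "finite Y" unfolding X_def Y_def by simp_all
  have "{c. cell_inside vs c} \<subseteq> {Min X - 1 .. Max X} \<times> Y"
  proof
    fix c assume "c \<in> {c. cell_inside vs c}"
    then obtain a b where c: "c = (a,b)" and
      od: "odd (card {a'. a' > a + 1 \<and> {(a', b), (a', b + 1)} \<in> cycle_edges vs})"
      unfolding cell_inside_def by (cases c) auto
    let ?T = "{a'. a' > a + 1 \<and> {(a', b), (a', b + 1)} \<in> cycle_edges vs}"
    have "?T \<noteq> {}" using od by (metis card.empty even_zero)
    then obtain a' where a': "a' > a + 1" "{(a', b), (a', b + 1)} \<in> cycle_edges vs" by blast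
    have "(a',b) \<in> set vs" using cyc_edge_mem[OF a'(2)] .
    then have ax: "a' \<in> X" and bY: "b \<in> Y" unfolding X_def Y_def by force+
    have "a' \<le> Max X" using ax fX by simp
    then have up: "a \<le> Max X" using a' by simp
    have lo: "Min X - 1 \<le> a"
    proof (rule ccontr)
      assume "\<not> Min X - 1 \<le> a"
      then have lt: "a + 1 < Min X" by simp
      have "?T = {x. {(x,b),(x,b+1)} \<in> cycle_edges vs}"
      proof (intro set_eqI iffI)
        fix x assume "x \<in> {x. {(x,b),(x,b+1)} \<in> cycle_edges vs}"
        then have "{(x,b),(x,b+1)} \<in> cycle_edges vs" by simp
        moreover have "(x,b) \<in> set vs" using calculation by (rule cyc_edge_mem)
        then have "x \<in> X" unfolding X_def by force
        then have "Min X \<le> x" using fX by simp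
        ultimately show "x \<in> ?T" using lt by simp
      qed simp
      then show False using od Sb_even[OF cyc, of b] by simp
    qed
    show "c \<in> {Min X - 1 .. Max X} \<times> Y" using c up lo bY by simp
  qed
  moreover have "finite ({Min X - 1 .. Max X} \<times> Y)" using fX by simp
  ultimately show ?thesis using finite_subset by blast
qed

lemma hex_finite:
  assumes "hexagonal_system V E" shows "finite V"
proof -
  obtain vs where cyc: "is_cycle UNIV hex_edges vs" and V: "V = \<Union> (cell_verts ` {c. cell_inside vs c})"
    using assms unfolding hexagonal_system_def by blast
  have "\<And>c. finite (cell_verts c)" unfolding cell_verts_def by (simp split: prod.splits)
  then show ?thesis unfolding V using inside_finite[OF cyc] by blast
qed

lemma hex_bip:
  assumes "hexagonal_system V E" shows "bip black V E"
proof -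
  obtain vs where V: "V = \<Union> (cell_verts ` {c. cell_inside vs c})"
    and E: "E = \<Union> (cell_edges ` {c. cell_inside vs c})"
    using assms unfolding hexagonal_system_def by blast
  show ?thesis unfolding bip_def
  proof
    fix e assume "e \<in> E"
    then obtain c where c: "cell_inside vs c" "e \<in> cell_edges c" unfolding E by blast
    then obtain u w where "e = {u,w}" "u \<in> cell_verts c" "w \<in> cell_verts c" "black u \<noteq> black w"
      using cell_edge_bip by blast
    then show "\<exists>u w. e = {u,w} \<and> u \<in> V \<and> w \<in> V \<and> black u \<noteq> black w"
      unfolding V using c(1) by blast
  qed
qed

theorem mainTheorem3:
  fixes V :: "(int \<times> int) set" and E :: "(int \<times> int) set set"
    and \<D> :: "(int \<times> int) set set set"
  assumes "hexagonal_system V E"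
    and "\<exists>M. perfect_matching V E M"
    and "finite \<D>"
    and "\<forall>D\<in>\<D>. e_cut black V E D"
    and "\<forall>vs. nice_cycle V E vs \<longrightarrow> (\<exists>D\<in>\<D>. cycle_edges vs \<inter> D \<noteq> {})"
  shows "complete_forcing_set V E (\<Union>\<D>)"
proof -
  have fin: "finite V" using hex_finite[OF assms(1)] .
  have b: "bip black V E" using hex_bip[OF assms(1)] .
  have sub: "\<Union>\<D> \<subseteq> E"
  proof
    fix e assume "e \<in> \<Union>\<D>"
    then obtain D where D: "D \<in> \<D>" "e \<in> D" by blast
    have "e_cut black V E D" using assms(4) D(1) by blast
    then have "D \<subseteq> E" unfolding e_cut_def by blast
    then show "e \<in> E" using D(2) by blast
  qed
  show ?thesis unfolding complete_forcing_set_def forcing_set_def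
  proof (intro conjI allI impI sub)
    fix M M' assume pm: "perfect_matching V E M"
    show "\<Union>\<D> \<inter> M \<subseteq> M" by blast
    assume h: "perfect_matching V E M' \<and> \<Union>\<D> \<inter> M \<subseteq> M'"
    show "M' = M" using main_graph[OF fin b assms(4) assms(5) pm] h by blast
  qed
qed

end
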